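(* Let $F$ be an Archimedean vector lattice and $(f_{\alpha})_{\alpha\in A}\subset F_{+}$ a net. The following are equivalent: (i) $f_{\alpha}\xrightarrow{uo}0_{F}$; (ii) if $h\in F_{+}$ is such that $\bigvee_{\alpha\ge\alpha_{0}}h\wedge f_{\alpha}=h$ for every $\alpha_{0}\in A$, then $h=0_{F}$; (iii) for every $h>0_{F}$ there are $e\in(0_{F},h]$ and $\alpha_{0}$ such that $(f_{\alpha}-h)^{+}\perp e$ for every $\alpha\ge\alpha_{0}$. Moreover, if $F$ has the principal projection property, these conditions are equivalent to: (iv) for every $h>0_{F}$ there are a nonzero component $e$ of $h$ and $\alpha_{0}$ such that $P_{e}f_{\alpha}\le e$ for every $\alpha\ge\alpha_{0}$.
   Context: A net order converges to $f$ if there is $G$ with $\bigwedge G=0$ such that for each $g\in G$ the net is eventually in $[f-g,f+g]$; it uo-converges to $f$ if $|f_\alpha-f|\wedge g$ order converges to $0$ for every $g\ge0$. $x\perp y$ means $|x|\wedge|y|=0$. $F$ has the principal projection property (PPP) if for every $e\in F$ the band $\{e\}^{dd}$ is a projection band, i.e. $F=\{e\}^{dd}+\{e\}^{d}$; $P_e$ denotes the corresponding band projection onto $\{e\}^{dd}$. An element $e$ is a component of $h$ if $e\perp h-e$. *)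

theory Defs
  imports Complex_Main "HOL-Library.Lattice_Algebras"
begin

text \<open>A (real) vector lattice: an ordered real vector space whose order is a lattice.
  Absolute value is |x| = x \<squnion> -x; the positive part is pprt x = x \<squnion> 0.\<close>
class vector_lattice = ordered_real_vector + lattice_ab_group_add_abs

definition archimedean_vl :: "'a::vector_lattice itself \<Rightarrow> bool" where
  "archimedean_vl _ \<longleftrightarrow>
     (\<forall>x y :: 'a. 0 \<le> x \<and> (\<forall>n::nat. real n *\<^sub>R x \<le> y) \<longrightarrow> x = 0)"

definition directed_index :: "'i::preorder itself \<Rightarrow> bool" where
  "directed_index _ \<longleftrightarrow> (\<forall>a b :: 'i. \<exists>c. a \<le> c \<and> b \<le> c)"

definition is_inf_of :: "'a::order \<Rightarrow> 'a set \<Rightarrow> bool" where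
  "is_inf_of x S \<longleftrightarrow> (\<forall>s\<in>S. x \<le> s) \<and> (\<forall>y. (\<forall>s\<in>S. y \<le> s) \<longrightarrow> y \<le> x)"

definition is_sup_of :: "'a::order \<Rightarrow> 'a set \<Rightarrow> bool" where
  "is_sup_of x S \<longleftrightarrow> (\<forall>s\<in>S. s \<le> x) \<and> (\<forall>y. (\<forall>s\<in>S. s \<le> y) \<longrightarrow> x \<le> y)"

definition order_conv :: "('i::preorder \<Rightarrow> 'a::vector_lattice) \<Rightarrow> 'a \<Rightarrow> bool" where
  "order_conv f x \<longleftrightarrow> (\<exists>G. is_inf_of 0 G \<and>
      (\<forall>g\<in>G. \<exists>a0. \<forall>a. a0 \<le> a \<longrightarrow> x - g \<le> f a \<and> f a \<le> x + g))"

definition uo_conv :: "('i::preorder \<Rightarrow> 'a::vector_lattice) \<Rightarrow> 'a \<Rightarrow> bool" where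
  "uo_conv f x \<longleftrightarrow> (\<forall>g. 0 \<le> g \<longrightarrow> order_conv (\<lambda>a. inf \<bar>f a - x\<bar> g) 0)"

definition disj :: "'a::vector_lattice \<Rightarrow> 'a \<Rightarrow> bool" (infix "\<bottom>\<^sub>v" 50) where
  "x \<bottom>\<^sub>v y \<longleftrightarrow> inf \<bar>x\<bar> \<bar>y\<bar> = 0"

definition disj_compl :: "'a::vector_lattice set \<Rightarrow> 'a set" where
  "disj_compl S = {x. \<forall>s\<in>S. x \<bottom>\<^sub>v s}"

definition PPP :: "'a::vector_lattice itself \<Rightarrow> bool" where
  "PPP _ \<longleftrightarrow> (\<forall>e x :: 'a. \<exists>y z. y \<in> disj_compl (disj_compl {e}) \<and>
                                z \<in> disj_compl {e} \<and> x = y + z)"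

text \<open>Band projection onto {e}^dd (well defined under PPP, since the sum is direct).\<close>
definition band_proj :: "'a::vector_lattice \<Rightarrow> 'a \<Rightarrow> 'a" where
  "band_proj e x = (THE y. y \<in> disj_compl (disj_compl {e}) \<and> x - y \<in> disj_compl {e})"

definition component_of :: "'a::vector_lattice \<Rightarrow> 'a \<Rightarrow> bool" where
  "component_of e h \<longleftrightarrow> e \<bottom>\<^sub>v (h - e)"

end

theory Submission
  imports Defs
begin

lemma vl_riesz:
  fixes u v w :: "'a::vector_lattice"
  assumes "0 \<le> u" "0 \<le> v" "0 \<le> w"
  shows "inf u (v + w) \<le> inf u v + inf u w"
proof -
  have "inf u v + inf u w = inf (inf (u + u) (u + w)) (inf (v + u) (v + w))"
    by (simp add: add_inf_distrib_left add_inf_distrib_right inf_assoc inf_commute inf_left_commute add.commute)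
  moreover have "inf u (v + w) \<le> inf (inf (u + u) (u + w)) (inf (v + u) (v + w))"
  proof -
    have "inf u (v + w) \<le> u" by simp
    moreover have "u \<le> u + u" "u \<le> u + w" "u \<le> v + u" using assms by simp_all
    moreover have "inf u (v + w) \<le> v + w" by simp
    ultimately show ?thesis by (meson le_inf_iff order_trans)
  qed
  ultimately show ?thesis by simp
qed

lemma vl_pprt_disj:
  fixes x :: "'a::vector_lattice"
  shows "inf (pprt x) (pprt (- x)) = 0"
proof -
  have "pprt x + pprt (- x) = \<bar>x\<bar>" by (simp add: abs_prts pprt_neg)
  moreover have "sup (pprt x) (pprt (- x)) = \<bar>x\<bar>"
  proof -
    have "sup (pprt x) (pprt (- x)) = sup 0 (sup x (- x))"
      by (simp add: pprt_def sup_assoc sup_commute sup_left_commute)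
    also have "\<dots> = \<bar>x\<bar>" using abs_ge_zero[of x] by (simp add: abs_lattice sup_absorb2)
    finally show ?thesis .
  qed
  ultimately show ?thesis using add_eq_inf_sup[of "pprt x" "pprt (-x)"] by simp
qed

lemma vl_disj_add:
  fixes x y :: "'a::vector_lattice"
  assumes "inf x y = 0"
  shows "x + y = sup x y"
  using add_eq_inf_sup[of x y] assms by simp

lemma vl_disj_mono:
  fixes a c d :: "'a::vector_lattice"
  assumes "\<bar>a\<bar> \<le> \<bar>c\<bar>" "c \<bottom>\<^sub>v d"
  shows "a \<bottom>\<^sub>v d"
proof -
  have x: "inf \<bar>a\<bar> \<bar>d\<bar> \<le> inf \<bar>c\<bar> \<bar>d\<bar>" using assms(1) by (rule inf_mono) simp
  have eq: "inf \<bar>c\<bar> \<bar>d\<bar> = 0" using assms(2) by (simp add: disj_def)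
  have "inf \<bar>a\<bar> \<bar>d\<bar> \<le> 0" using x eq by metis
  moreover have "0 \<le> inf \<bar>a\<bar> \<bar>d\<bar>" by simp
  ultimately show ?thesis by (simp add: disj_def antisym)
qed

lemma vl_disj_sym:
  fixes a b :: "'a::vector_lattice"
  shows "a \<bottom>\<^sub>v b \<longleftrightarrow> b \<bottom>\<^sub>v a"
  by (simp add: disj_def inf_commute)

lemma vl_disj_diff:
  fixes a b s :: "'a::vector_lattice"
  assumes "a \<bottom>\<^sub>v s" "b \<bottom>\<^sub>v s"
  shows "(a - b) \<bottom>\<^sub>v s"
proof -
  have "inf \<bar>a - b\<bar> \<bar>s\<bar> \<le> inf (\<bar>a\<bar> + \<bar>b\<bar>) \<bar>s\<bar>"
    by (rule inf_mono) (simp_all add: abs_triangle_ineq4)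
  also have "\<dots> = inf \<bar>s\<bar> (\<bar>a\<bar> + \<bar>b\<bar>)" by (simp add: inf_commute)
  also have "\<dots> \<le> inf \<bar>s\<bar> \<bar>a\<bar> + inf \<bar>s\<bar> \<bar>b\<bar>" by (rule vl_riesz) simp_all
  also have "\<dots> = 0" using assms by (simp add: disj_def inf_commute)
  finally have "inf \<bar>a - b\<bar> \<bar>s\<bar> \<le> 0" .
  then show ?thesis by (simp add: disj_def antisym)
qed

lemma vl_disj_self:
  fixes x :: "'a::vector_lattice"
  assumes "x \<bottom>\<^sub>v x" shows "x = 0"
  using assms by (simp add: disj_def)

lemma vl_comp_nonneg:
  fixes e h :: "'a::vector_lattice"
  assumes h: "0 \<le> h" and c: "e \<bottom>\<^sub>v (h - e)"
  shows "0 \<le> e"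
proof -
  define n where "n = pprt (- e)"
  have n0: "0 \<le> n" by (simp add: n_def)
  have "n \<le> \<bar>h - e\<bar> + pprt e"
  proof -
    have "n \<le> h + n" using h by simp
    also have "h + n = (h - e) + pprt e"
      using prts[of e] by (simp add: n_def pprt_neg algebra_simps)
    also have "\<dots> \<le> \<bar>h - e\<bar> + pprt e" by (rule add_right_mono[OF abs_ge_self])
    finally show ?thesis .
  qed
  then have "n = inf n (\<bar>h - e\<bar> + pprt e)" by (simp add: inf_absorb1)
  also have "\<dots> \<le> inf n \<bar>h - e\<bar> + inf n (pprt e)" by (rule vl_riesz) (simp_all add: n0)
  also have "inf n (pprt e) = 0" using vl_pprt_disj[of e] by (simp add: n_def inf_commute)
  also have "inf n \<bar>h - e\<bar> \<le> inf \<bar>e\<bar> \<bar>h - e\<bar>"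
    by (rule inf_mono) (simp_all add: n_def abs_prts pprt_neg)
  also have "inf \<bar>e\<bar> \<bar>h - e\<bar> = 0" using c by (simp add: disj_def)
  finally have "n \<le> 0" by simp
  then have "pprt (- e) = 0" using n0 by (simp add: n_def antisym)
  then show ?thesis by (simp add: le_zero_iff_zero_pprt[symmetric])
qed

lemma uo_iff_pos:
  fixes f :: "'i::preorder \<Rightarrow> 'a::vector_lattice"
  assumes pos: "\<And>a. 0 \<le> f a"
  shows "uo_conv f 0 \<longleftrightarrow> (\<forall>u. 0 \<le> u \<longrightarrow> (\<exists>G. is_inf_of 0 G \<and>
     (\<forall>g\<in>G. \<exists>a0. \<forall>a. a0 \<le> a \<longrightarrow> - g \<le> inf (f a) u \<and> inf (f a) u \<le> g)))"
  using pos by (simp add: uo_conv_def order_conv_def abs_of_nonneg)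

lemma dir_i_ii:
  fixes f :: "'i::preorder \<Rightarrow> 'a::vector_lattice"
  assumes pos: "\<And>a. 0 \<le> f a" and uo: "uo_conv f 0"
    and h0: "0 \<le> h" and sup: "\<forall>a0. is_sup_of h {inf h (f a) | a. a0 \<le> a}"
  shows "h = 0"
proof -
  have "\<exists>G. is_inf_of 0 G \<and>
     (\<forall>g\<in>G. \<exists>a0. \<forall>a. a0 \<le> a \<longrightarrow> - g \<le> inf (f a) h \<and> inf (f a) h \<le> g)"
    using uo[unfolded uo_iff_pos[OF pos], rule_format, of h] h0 by (simp add: order_less_imp_le)
  then obtain G where G: "is_inf_of 0 G"
    and Gc: "\<forall>g\<in>G. \<exists>a0. \<forall>a. a0 \<le> a \<longrightarrow> - g \<le> inf (f a) h \<and> inf (f a) h \<le> g"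
    by (elim exE conjE) (rule that)
  have "h \<le> g" if gG: "g \<in> G" for g
  proof -
    obtain a0 where a0': "\<forall>a. a0 \<le> a \<longrightarrow> - g \<le> inf (f a) h \<and> inf (f a) h \<le> g"
      using bspec[OF Gc gG] by (elim exE) (rule that)
    then have a0: "\<forall>a. a0 \<le> a \<longrightarrow> inf (f a) h \<le> g" by simp
    have "\<forall>s\<in>{inf h (f a) | a. a0 \<le> a}. s \<le> g" using a0 by (auto simp: inf_commute)
    then show ?thesis using sup unfolding is_sup_of_def by blast
  qed
  then have "h \<le> 0" using G unfolding is_inf_of_def by blast
  then show ?thesis using h0 by simp
qed

lemma dir_i_iii:
  fixes f :: "'i::preorder \<Rightarrow> 'a::vector_lattice"
  assumes pos: "\<And>a. 0 \<le> f a" and uo: "uo_conv f 0" and h0: "0 < h"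
  shows "\<exists>e a0. 0 < e \<and> e \<le> h \<and> (\<forall>a. a0 \<le> a \<longrightarrow> pprt (f a - h) \<bottom>\<^sub>v e)"
proof -
  have "\<exists>G. is_inf_of 0 G \<and>
     (\<forall>g\<in>G. \<exists>a0. \<forall>a. a0 \<le> a \<longrightarrow> - g \<le> inf (f a) h \<and> inf (f a) h \<le> g)"
    using uo[unfolded uo_iff_pos[OF pos], rule_format, of h] h0 by (simp add: order_less_imp_le)
  then obtain G where G: "is_inf_of 0 G"
    and Gc: "\<forall>g\<in>G. \<exists>a0. \<forall>a. a0 \<le> a \<longrightarrow> - g \<le> inf (f a) h \<and> inf (f a) h \<le> g"
    by (elim exE conjE) (rule that)
  have "\<exists>v\<in>G. \<not> h \<le> v"
  proof (rule ccontr)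
    assume "\<not> ?thesis"
    then have "h \<le> 0" using G unfolding is_inf_of_def by blast
    then show False using h0 by simp
  qed
  then obtain v a0 where vG: "v \<in> G" and nhv: "\<not> h \<le> v"
    and a0: "\<forall>a. a0 \<le> a \<longrightarrow> inf (f a) h \<le> v" using Gc by blast
  have "0 \<le> inf (f a0) h" using pos h0 by simp
  also have "\<dots> \<le> v" using a0 by simp
  finally have v0: "0 \<le> v" .
  define e where "e = pprt (h - v)"
  have e0: "0 < e"
  proof -
    have "e \<noteq> 0"
    proof
      assume "e = 0"
      then have "h - v \<le> 0" by (simp add: e_def le_zero_iff_zero_pprt)
      then show False using nhv by simp
    qed
    then show ?thesis by (simp add: e_def order_less_le)
  qed
  have eh: "e \<le> h" using v0 h0 by (simp add: e_def pprt_def)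
  have "pprt (f a - h) \<bottom>\<^sub>v e" if "a0 \<le> a" for a
  proof -
    have key: "inf (f a) h = h - pprt (h - f a)"
      by (simp add: pprt_def diff_sup_eq_inf add_inf_distrib_left inf_commute)
    have "inf (f a) h \<le> v" using a0 that by simp
    then have "h - pprt (h - f a) \<le> v" using key by simp
    then have "h - v \<le> pprt (h - f a)" by (simp add: algebra_simps)
    then have ef: "e \<le> pprt (h - f a)" by (simp add: e_def pprt_def)
    have "inf (pprt (f a - h)) e \<le> inf (pprt (f a - h)) (pprt (h - f a))"
      using ef by (rule inf_mono[OF order_refl])
    also have "\<dots> = 0" using vl_pprt_disj[of "f a - h"] by simp
    finally have "inf (pprt (f a - h)) e \<le> 0" .
    moreover have "0 \<le> inf (pprt (f a - h)) e" using e0 by simp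
    ultimately show ?thesis using e0 by (simp add: disj_def abs_of_nonneg antisym)
  qed
  then show ?thesis using e0 eh by blast
qed

lemma dir_iii_ii:
  fixes f :: "'i::preorder \<Rightarrow> 'a::vector_lattice"
  assumes pos: "\<And>a. 0 \<le> f a"
    and iii: "\<forall>h. 0 < h \<longrightarrow> (\<exists>e a0. 0 < e \<and> e \<le> h \<and>
                  (\<forall>a. a0 \<le> a \<longrightarrow> pprt (f a - h) \<bottom>\<^sub>v e))"
    and h0: "0 \<le> h" and sup: "\<forall>a0. is_sup_of h {inf h (f a) | a. a0 \<le> a}"
  shows "h = 0"
proof (rule ccontr)
  assume hn: "h \<noteq> 0"
  define h' where "h' = (1/2::real) *\<^sub>R h"
  have h'0: "0 < h'" using h0 hn by (simp add: h'_def order_less_le scaleR_nonneg_nonneg)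
  have "h' + h' = ((1/2::real) + 1/2) *\<^sub>R h" unfolding h'_def by (rule scaleR_add_left[symmetric])
  then have hh: "h = h' + h'" by simp
  obtain e a0 where e0: "0 < e" and eh: "e \<le> h'"
    and ed: "\<forall>a. a0 \<le> a \<longrightarrow> pprt (f a - h') \<bottom>\<^sub>v e" using iii h'0 by blast
  have "s \<le> h - e" if sS: "s \<in> {inf h (f a) | a. a0 \<le> a}" for s
  proof -
    obtain a where a: "a0 \<le> a" and s: "s = inf h (f a)" using sS by blast
    define g where "g = pprt (f a - h')"
    have g0: "0 \<le> g" by (simp add: g_def)
    have ge: "inf g e = 0" using ed a e0 g0 by (simp add: g_def disj_def abs_of_nonneg)
    have "f a - h' \<le> g" by (simp add: g_def pprt_def)
    then have "h' + (f a - h') \<le> h' + g" by (rule add_left_mono)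
    then have "f a \<le> h' + g" by simp
    then have "s \<le> inf h (h' + g)" using s by (simp add: inf.coboundedI2)
    also have "\<dots> = h' + inf h' g" using hh by (simp add: add_inf_distrib_left)
    also have "inf h' g + e \<le> h'"
    proof -
      have "inf (inf h' g) e \<le> inf g e" by (rule inf_mono) simp_all
      moreover have "0 \<le> inf (inf h' g) e" using h'0 g0 e0 by (simp add: order_less_imp_le)
      ultimately have "inf (inf h' g) e = 0" using ge by (simp add: antisym)
      then have "inf h' g + e = sup (inf h' g) e" by (rule vl_disj_add)
      also have "\<dots> \<le> h'" using eh by simp
      finally show ?thesis .
    qed
    then have "h' + inf h' g \<le> h - e" using hh by (simp add: algebra_simps)
    finally show ?thesis .
  qed
  then have "h \<le> h - e" using sup unfolding is_sup_of_def by blast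
  then show False using e0 by simp
qed

lemma dir_ii_i:
  fixes f :: "'i::preorder \<Rightarrow> 'a::vector_lattice"
  assumes arch: "archimedean_vl TYPE('a)"
    and dir: "directed_index TYPE('i)"
    and pos: "\<And>a. 0 \<le> f a"
    and ii: "\<forall>h. 0 \<le> h \<and> (\<forall>a0. is_sup_of h {inf h (f a) | a. a0 \<le> a}) \<longrightarrow> h = 0"
  shows "uo_conv f 0"
  unfolding uo_iff_pos[OF pos]
proof (intro allI impI)
  fix u :: 'a assume u0: "0 \<le> u"
  define G where "G = {v. \<exists>a0. \<forall>a. a0 \<le> a \<longrightarrow> inf (f a) u \<le> v}"
  have G0: "0 \<le> v" if vG: "v \<in> G" for v
  proof -
    obtain a0 where "\<forall>a. a0 \<le> a \<longrightarrow> inf (f a) u \<le> v" using vG unfolding G_def by blast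
    then have "inf (f a0) u \<le> v" by simp
    moreover have "0 \<le> inf (f a0) u" using pos u0 by simp
    ultimately show ?thesis by (rule order_trans[rotated])
  qed
  have conv: "\<forall>g\<in>G. \<exists>a0. \<forall>a. a0 \<le> a \<longrightarrow> - g \<le> inf (f a) u \<and> inf (f a) u \<le> g"
  proof
    fix g assume gG: "g \<in> G"
    then obtain a0 where a0: "\<forall>a. a0 \<le> a \<longrightarrow> inf (f a) u \<le> g" unfolding G_def by blast
    have ng: "- g \<le> inf (f a) u" for a
    proof -
      have "-g \<le> 0" using G0[OF gG] by simp
      also have "0 \<le> inf (f a) u" using pos u0 by simp
      finally show ?thesis .
    qed
    show "\<exists>a0. \<forall>a. a0 \<le> a \<longrightarrow> - g \<le> inf (f a) u \<and> inf (f a) u \<le> g"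
      using a0 ng by blast
  qed
  have inf0: "is_inf_of 0 G"
    unfolding is_inf_of_def
  proof (intro conjI allI impI ballI)
    fix s assume "s \<in> G" then show "0 \<le> s" by (rule G0)
  next
    fix y assume ylb: "\<forall>s\<in>G. y \<le> s"
    define h where "h = sup y 0"
    have h0: "0 \<le> h" by (simp add: h_def)
    have hlb: "h \<le> v" if vG: "v \<in> G" for v using ylb vG G0[OF vG] by (simp add: h_def)
    have hs: "is_sup_of h {inf h (f a) | a. a0 \<le> a}" for a0
      unfolding is_sup_of_def
    proof (intro conjI allI impI ballI)
      fix s assume "s \<in> {inf h (f a) |a. a0 \<le> a}" then show "s \<le> h" by auto
    next
      fix w assume wub: "\<forall>s\<in>{inf h (f a) |a. a0 \<le> a}. s \<le> w"
      have wa: "inf h (f a) \<le> w" if aa: "a0 \<le> a" for a using wub aa by blast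
      define d where "d = h - inf w h"
      have dd: "inf w h = h - d" unfolding d_def by (simp only: diff_diff_eq2 add_diff_cancel_left')
      have d0: "0 \<le> d" unfolding d_def diff_ge_0_iff_ge by (rule inf.cobounded2)
      have step: "u - real n *\<^sub>R d \<in> G" for n
      proof (induction n)
        case 0
        then show ?case unfolding G_def by auto
      next
        case (Suc n)
        then obtain a1 where a1: "\<forall>a. a1 \<le> a \<longrightarrow> inf (f a) u \<le> u - real n *\<^sub>R d"
          unfolding G_def by blast
        have hn: "h \<le> u - real n *\<^sub>R d" using hlb Suc.IH by blast
        obtain a2 where a2: "a0 \<le> a2" "a1 \<le> a2" using dir unfolding directed_index_def by blast
        have "inf (f a) u \<le> u - real (Suc n) *\<^sub>R d" if aa2: "a2 \<le> a" for a
        proof -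
          have aa: "a0 \<le> a" "a1 \<le> a" using a2 aa2 order_trans by blast+
          define c where "c = u - real n *\<^sub>R d - h"
          have c0: "0 \<le> c" using hn by (simp add: c_def)
          have hc: "h + c = u - real n *\<^sub>R d" by (simp add: c_def)
          have "inf (f a) u \<le> inf (f a) (h + c)"
            using a1 aa by (simp add: hc)
          also have "\<dots> \<le> inf (f a + c) (h + c)" using c0 by (intro inf_mono) simp_all
          also have "\<dots> = inf (f a) h + c" by (simp add: add_inf_distrib_right)
          also have "\<dots> \<le> inf w h + c"
          proof -
            have "inf (f a) h \<le> inf w h" using wa[OF aa(1)] by (simp add: inf_commute)
            then show ?thesis by (rule add_right_mono)
          qed
          also have "inf w h + c = u - real (Suc n) *\<^sub>R d"
            by (simp add: dd c_def algebra_simps scaleR_add_left)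
          finally show ?thesis .
        qed
        then show ?case unfolding G_def by blast
      qed
      have nd: "real n *\<^sub>R d \<le> u" for n
      proof -
        have "h \<le> u - real n *\<^sub>R d" using hlb step by blast
        then have "h + real n *\<^sub>R d \<le> u" by (simp add: algebra_simps)
        then show ?thesis by (rule order_trans[OF add_increasing[OF h0 order_refl]])
      qed
      have "d = 0" using arch d0 nd unfolding archimedean_vl_def by blast
      then show "h \<le> w" using dd by (metis diff_zero inf.cobounded1)
    qed
    have "h = 0" using ii h0 hs by simp
    then show "y \<le> 0" unfolding h_def by (metis sup.cobounded1)
  qed
  show "\<exists>G. is_inf_of 0 G \<and> (\<forall>g\<in>G. \<exists>a0. \<forall>a. a0 \<le> a \<longrightarrow> - g \<le> inf (f a) u \<and> inf (f a) u \<le> g)"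
    using inf0 conv by blast
qed

lemma mem_dc1: "x \<in> disj_compl {e} \<longleftrightarrow> x \<bottom>\<^sub>v e"
  by (simp add: disj_compl_def)

lemma mem_dc2: "x \<in> disj_compl (disj_compl {e}) \<longleftrightarrow> (\<forall>s. s \<bottom>\<^sub>v e \<longrightarrow> x \<bottom>\<^sub>v s)"
  by (auto simp: disj_compl_def)

lemma dc_diff:
  fixes a b :: "'a::vector_lattice"
  assumes "a \<in> disj_compl S" "b \<in> disj_compl S"
  shows "a - b \<in> disj_compl S"
  using assms by (simp add: disj_compl_def vl_disj_diff)

lemma pprt_le_abs':
  fixes x :: "'a::vector_lattice"
  shows "pprt x \<le> \<bar>x\<bar>"
  unfolding pprt_def by (rule le_supI) (simp_all add: abs_ge_self)

lemma abs_pprt':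
  fixes x :: "'a::vector_lattice"
  shows "\<bar>pprt x\<bar> = pprt x"
  by (simp add: abs_of_nonneg)

lemma band_proj_prop:
  fixes e x :: "'a::vector_lattice"
  assumes ppp: "PPP TYPE('a)"
  shows "band_proj e x \<in> disj_compl (disj_compl {e}) \<and> x - band_proj e x \<in> disj_compl {e}"
proof -
  obtain y z where y: "y \<in> disj_compl (disj_compl {e})" and z: "z \<in> disj_compl {e}"
    and xyz: "x = y + z" using ppp unfolding PPP_def by blast
  have P: "y \<in> disj_compl (disj_compl {e}) \<and> x - y \<in> disj_compl {e}" using y z xyz by simp
  have U: "y' = y" if yy: "y' \<in> disj_compl (disj_compl {e}) \<and> x - y' \<in> disj_compl {e}" for y'
  proof -
    have m1: "y' - y \<in> disj_compl (disj_compl {e})" by (rule dc_diff[OF conjunct1[OF yy] y])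
    have "(x - y) - (x - y') \<in> disj_compl {e}" by (rule dc_diff[OF conjunct2[OF P] conjunct2[OF yy]])
    then have m2: "y' - y \<in> disj_compl {e}" by (simp add: algebra_simps)
    have "(y' - y) \<bottom>\<^sub>v (y' - y)" using m1 m2 unfolding disj_compl_def by blast
    then have "y' - y = 0" by (rule vl_disj_self)
    then show ?thesis by simp
  qed
  show ?thesis unfolding band_proj_def
    by (rule theI[where P="\<lambda>y. y \<in> disj_compl (disj_compl {e}) \<and> x - y \<in> disj_compl {e}", OF P U])
qed

lemma dir_iv_iii:
  fixes f :: "'i::preorder \<Rightarrow> 'a::vector_lattice"
  assumes ppp: "PPP TYPE('a)" and h0: "0 < h" and en: "e \<noteq> 0"
    and comp: "component_of e h"
    and pe: "\<forall>a. a0 \<le> a \<longrightarrow> band_proj e (f a) \<le> e"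
  shows "0 < e \<and> e \<le> h \<and> (\<forall>a. a0 \<le> a \<longrightarrow> pprt (f a - h) \<bottom>\<^sub>v e)"
proof -
  have c: "e \<bottom>\<^sub>v (h - e)" using comp by (simp add: component_of_def)
  have e0: "0 \<le> e" using vl_comp_nonneg[OF _ c] h0 by simp
  have c': "(h - e) \<bottom>\<^sub>v (h - (h - e))" using c by (simp add: vl_disj_sym)
  have he0: "0 \<le> h - e" using vl_comp_nonneg[OF _ c'] h0 by simp
  have "pprt (f a - h) \<bottom>\<^sub>v e" if aa: "a0 \<le> a" for a
  proof -
    define p where "p = band_proj e (f a)"
    define q where "q = f a - p"
    have qe: "q \<bottom>\<^sub>v e" using band_proj_prop[OF ppp, of e "f a"] by (simp add: q_def p_def mem_dc1)
    have pe': "p \<le> e" using pe aa by (simp add: p_def)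
    have "f a - h = (p - e) + (q - (h - e))" by (simp add: q_def algebra_simps)
    also have "\<dots> \<le> q - (h - e)" using pe' by simp
    finally have "pprt (f a - h) \<le> pprt (q - (h - e))" by (rule pprt_mono)
    also have "\<dots> \<le> \<bar>q - (h - e)\<bar>" by (rule pprt_le_abs')
    finally have le: "\<bar>pprt (f a - h)\<bar> \<le> \<bar>q - (h - e)\<bar>" by (simp add: abs_pprt')
    have "(h - e) \<bottom>\<^sub>v e" using c by (simp add: vl_disj_sym)
    then have "(q - (h - e)) \<bottom>\<^sub>v e" by (rule vl_disj_diff[OF qe])
    then show ?thesis by (rule vl_disj_mono[OF le])
  qed
  moreover have "0 < e" using e0 en by (simp add: order_less_le)
  moreover have "e \<le> h" using he0 by simp
  ultimately show ?thesis by blast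
qed

lemma dir_iii_iv:
  fixes f :: "'i::preorder \<Rightarrow> 'a::vector_lattice"
  assumes ppp: "PPP TYPE('a)" and h0: "0 < h" and e00: "0 < e0" and e0h: "e0 \<le> h"
    and ed: "\<forall>a. a0 \<le> a \<longrightarrow> pprt (f a - h) \<bottom>\<^sub>v e0"
  shows "\<exists>e. e \<noteq> 0 \<and> component_of e h \<and> (\<forall>a. a0 \<le> a \<longrightarrow> band_proj e (f a) \<le> e)"
proof -
  obtain y z where y: "y \<in> disj_compl (disj_compl {e0})" and z: "z \<in> disj_compl {e0}"
    and hyz: "h = y + z" using ppp unfolding PPP_def by blast
  have yd: "\<And>s. s \<bottom>\<^sub>v e0 \<Longrightarrow> y \<bottom>\<^sub>v s" using y by (simp add: mem_dc2)
  have ze: "z \<bottom>\<^sub>v e0" using z by (simp add: mem_dc1)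
  have yz: "y \<bottom>\<^sub>v z" by (rule yd[OF ze])
  have hy: "h - y = z" using hyz by simp
  have comp: "component_of y h" using yz hy by (simp add: component_of_def)
  have y0: "0 \<le> y" using vl_comp_nonneg[of h y] h0 yz hy by simp
  have hz: "h - z = y" using hyz by simp
  have z0: "0 \<le> z" using vl_comp_nonneg[of h z] h0 yz hz by (simp add: vl_disj_sym)
  have e0y: "e0 \<le> y"
  proof -
    have "e0 = inf e0 (y + z)" using e0h hyz by (simp add: inf_absorb1)
    also have "\<dots> \<le> inf e0 y + inf e0 z" using e00 y0 z0 by (simp add: vl_riesz order_less_imp_le)
    also have "inf e0 z = 0" using ze e00 z0 by (simp add: disj_def abs_of_nonneg inf_commute)
    finally have "e0 \<le> inf e0 y" by simp
    then show ?thesis by simp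
  qed
  have yn: "y \<noteq> 0"
  proof
    assume "y = 0"
    with e0y have "e0 \<le> 0" by simp
    with e00 show False by simp
  qed
  have "band_proj y (f a) \<le> y" if aa: "a0 \<le> a" for a
  proof -
    define g where "g = pprt (f a - h)"
    have "g \<bottom>\<^sub>v e0" using ed aa by (simp add: g_def)
    then have "y \<bottom>\<^sub>v g" by (rule yd)
    then have gy: "g \<bottom>\<^sub>v y" by (simp add: vl_disj_sym)
    define p where "p = band_proj y (f a)"
    define q where "q = f a - p"
    have pdd: "p \<in> disj_compl (disj_compl {y})" and qy: "q \<bottom>\<^sub>v y"
      using band_proj_prop[OF ppp, of y "f a"] by (simp_all add: q_def p_def mem_dc1)
    define b where "b = p - y"
    define d where "d = q - z"
    have ydd: "y \<in> disj_compl (disj_compl {y})" by (simp add: mem_dc2 vl_disj_sym)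
    have bdd: "b \<in> disj_compl (disj_compl {y})" unfolding b_def using pdd ydd by (rule dc_diff)
    have bd: "\<And>s. s \<bottom>\<^sub>v y \<Longrightarrow> b \<bottom>\<^sub>v s" using bdd by (simp add: mem_dc2)
    have zy: "z \<bottom>\<^sub>v y" using yz by (simp add: vl_disj_sym)
    have dy: "d \<bottom>\<^sub>v y" unfolding d_def by (rule vl_disj_diff[OF qy zy])
    have fhbd: "f a - h = b + d" by (simp add: b_def d_def q_def hyz algebra_simps)
    have "b = (f a - h) + (- d)" using fhbd by simp
    also have "\<dots> \<le> g + \<bar>d\<bar>" by (rule add_mono) (simp_all add: g_def pprt_def abs_ge_minus_self)
    finally have b_le: "b \<le> g + \<bar>d\<bar>" .
    have g0: "0 \<le> g" by (simp add: g_def)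
    have pb: "pprt b \<le> g + \<bar>d\<bar>" unfolding pprt_def using b_le g0 by (simp add: add_nonneg_nonneg)
    have "\<bar>pprt b\<bar> \<le> \<bar>b\<bar>" by (simp add: abs_pprt' pprt_le_abs')
    then have pbg: "pprt b \<bottom>\<^sub>v g" and pbd: "pprt b \<bottom>\<^sub>v d"
      by (rule vl_disj_mono[OF _ bd[OF gy]], rule vl_disj_mono[OF _ bd[OF dy]])
    have i1: "inf (pprt b) g = 0" using pbg g0 by (simp add: disj_def abs_of_nonneg)
    have i2: "inf (pprt b) \<bar>d\<bar> = 0" using pbd by (simp add: disj_def abs_of_nonneg)
    have "pprt b = inf (pprt b) (g + \<bar>d\<bar>)" using pb by (simp add: inf_absorb1)
    also have "\<dots> \<le> inf (pprt b) g + inf (pprt b) \<bar>d\<bar>" using g0 by (simp add: vl_riesz)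
    finally have "pprt b \<le> 0" using i1 i2 by simp
    then have "pprt b = 0" by (simp add: antisym)
    then have "b \<le> 0" by (simp add: le_zero_iff_zero_pprt)
    then show ?thesis by (simp add: b_def p_def)
  qed
  then show ?thesis using yn comp by (intro exI[of _ y]) simp
qed

theorem theorem6p2:
  fixes f :: "'i::preorder \<Rightarrow> 'a::vector_lattice"
  assumes arch: "archimedean_vl TYPE('a)"
    and dir: "directed_index TYPE('i)"
    and pos: "\<And>a. 0 \<le> f a"
  shows "(uo_conv f 0 \<longleftrightarrow>
            (\<forall>h. 0 \<le> h \<and> (\<forall>a0. is_sup_of h {inf h (f a) | a. a0 \<le> a}) \<longrightarrow> h = 0))
       \<and> (uo_conv f 0 \<longleftrightarrow>
            (\<forall>h. 0 < h \<longrightarrow> (\<exists>e a0. 0 < e \<and> e \<le> h \<and>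
                  (\<forall>a. a0 \<le> a \<longrightarrow> pprt (f a - h) \<bottom>\<^sub>v e))))
       \<and> (PPP TYPE('a) \<longrightarrow>
            (uo_conv f 0 \<longleftrightarrow>
              (\<forall>h. 0 < h \<longrightarrow> (\<exists>e a0. e \<noteq> 0 \<and> component_of e h \<and>
                  (\<forall>a. a0 \<le> a \<longrightarrow> band_proj e (f a) \<le> e)))))"
proof -
  let ?ii = "\<forall>h. 0 \<le> h \<and> (\<forall>a0. is_sup_of h {inf h (f a) | a. a0 \<le> a}) \<longrightarrow> h = 0"
  let ?iii = "\<forall>h. 0 < h \<longrightarrow> (\<exists>e a0. 0 < e \<and> e \<le> h \<and>
                  (\<forall>a. a0 \<le> a \<longrightarrow> pprt (f a - h) \<bottom>\<^sub>v e))"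
  let ?iv = "\<forall>h. 0 < h \<longrightarrow> (\<exists>e a0. e \<noteq> 0 \<and> component_of e h \<and>
                  (\<forall>a. a0 \<le> a \<longrightarrow> band_proj e (f a) \<le> e))"
  have E1: "uo_conv f 0 \<longleftrightarrow> ?ii"
  proof
    assume uo: "uo_conv f 0"
    show ?ii
    proof (intro allI impI)
      fix h assume "0 \<le> h \<and> (\<forall>a0. is_sup_of h {inf h (f a) | a. a0 \<le> a})"
      then show "h = 0" using dir_i_ii[OF pos uo] by blast
    qed
  next
    assume ?ii
    then show "uo_conv f 0" by (rule dir_ii_i[OF arch dir pos])
  qed
  have E2: "uo_conv f 0 \<longleftrightarrow> ?iii"
  proof
    assume uo: "uo_conv f 0"
    show ?iii
    proof (intro allI impI)
      fix h :: 'a assume "0 < h"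
      then show "\<exists>e a0. 0 < e \<and> e \<le> h \<and> (\<forall>a. a0 \<le> a \<longrightarrow> pprt (f a - h) \<bottom>\<^sub>v e)"
        by (rule dir_i_iii[OF pos uo])
    qed
  next
    assume iii: ?iii
    have ?ii
    proof (intro allI impI)
      fix h assume "0 \<le> h \<and> (\<forall>a0. is_sup_of h {inf h (f a) | a. a0 \<le> a})"
      then show "h = 0" using dir_iii_ii[OF pos iii] by blast
    qed
    then show "uo_conv f 0" using E1 by simp
  qed
  have E3: "PPP TYPE('a) \<longrightarrow> (uo_conv f 0 \<longleftrightarrow> ?iv)"
  proof
    assume ppp: "PPP TYPE('a)"
    show "uo_conv f 0 \<longleftrightarrow> ?iv"
    proof
      assume uo: "uo_conv f 0"
      show ?iv
      proof (intro allI impI)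
        fix h :: 'a assume h0: "0 < h"
        obtain e0 a0 where e0: "0 < e0" "e0 \<le> h"
          and ed: "\<forall>a. a0 \<le> a \<longrightarrow> pprt (f a - h) \<bottom>\<^sub>v e0"
          using dir_i_iii[OF pos uo h0] by blast
        obtain e where "e \<noteq> 0 \<and> component_of e h \<and> (\<forall>a. a0 \<le> a \<longrightarrow> band_proj e (f a) \<le> e)"
          using dir_iii_iv[OF ppp h0 e0 ed] by blast
        then show "\<exists>e a0. e \<noteq> 0 \<and> component_of e h \<and> (\<forall>a. a0 \<le> a \<longrightarrow> band_proj e (f a) \<le> e)"
          by blast
      qed
    next
      assume iv: ?iv
      have ?iii
      proof (intro allI impI)
        fix h :: 'a assume h0: "0 < h"
        obtain e a0 where en: "e \<noteq> 0" and c: "component_of e h"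
          and pe: "\<forall>a. a0 \<le> a \<longrightarrow> band_proj e (f a) \<le> e"
          using iv h0 by blast
        have "0 < e \<and> e \<le> h \<and> (\<forall>a. a0 \<le> a \<longrightarrow> pprt (f a - h) \<bottom>\<^sub>v e)"
          by (rule dir_iv_iii[OF ppp h0 en c pe])
        then show "\<exists>e a0. 0 < e \<and> e \<le> h \<and> (\<forall>a. a0 \<le> a \<longrightarrow> pprt (f a - h) \<bottom>\<^sub>v e)"
          by blast
      qed
      then show "uo_conv f 0" using E2 by simp
    qed
  qed
  show ?thesis using E1 E2 E3 by blast
qed

end
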